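(* Let $A_3^*$ be the set of nonnegative integers whose base-$3$ expansion contains no digit $2$, and let $G_3^*$ be the set of positive integers $k$ such that $v_p(k) \in A_3^*$ for every prime $p$ dividing $k$. Then the upper uniform density of $G_3^*$ equals its asymptotic density: $\overline{u}(G_3^* ) = d(G_3^* )$.
   Context: $G_3^*$ is (by Rankin's characterization) the greedy set of positive integers free of 3-term geometric progressions. For $A\subseteq\mathbb{N}$: the asymptotic density is $d(A)=\lim_{N\to\infty}\frac{|A\cap\{1,\dots,N\}|}{N}$ when it exists (for $G_3^*$ it exists and equals $\prod_p (1-\frac1p)\sum_{i\in A_3^*} p^{-i}$); the upper uniform density is $\overline{u}(A) = \lim_{s\to\infty} \max_{n\ge 0} \frac{1}{s}\,\#\{a\in A : n < a \le n+s\}$. *)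

theory Defs
  imports "HOL-Analysis.Analysis" "HOL-Computational_Algebra.Primes"
begin

definition A3star :: "nat set" where
  "A3star = {n. \<forall>k::nat. (n div 3 ^ k) mod 3 \<noteq> 2}"

definition G3star :: "nat set" where
  "G3star = {k. k > 0 \<and> (\<forall>p::nat. prime p \<and> p dvd k \<longrightarrow> multiplicity p k \<in> A3star)}"

definition density_seq :: "nat set \<Rightarrow> nat \<Rightarrow> real" where
  "density_seq A N = real (card (A \<inter> {1..N})) / real N"

text \<open>Counting function for the upper uniform density:
  max over n \<ge> 0 of |A \<inter> (n, n+s]| / s (the maximum exists since the counts are bounded by s).\<close>
definition uniform_seq :: "nat set \<Rightarrow> nat \<Rightarrow> real" where
  "uniform_seq A s = real (Max {card (A \<inter> {n<..n+s}) | n. True}) / real s"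

end

theory Submission
  imports Defs "HOL-Real_Asymp.Real_Asymp"
begin

definition ind :: "nat set \<Rightarrow> nat \<Rightarrow> real" where
  "ind S k = (if k \<in> S then 1 else 0)"
definition W :: "nat set \<Rightarrow> nat \<Rightarrow> nat \<Rightarrow> real" where
  "W S a s = (\<Sum>k\<in>{a..<a+s}. ind S k)"

lemma W_card: "W S a s = real (card (S \<inter> {a..<a+s}))"
proof -
  have "card (S \<inter> {a..<a+s}) = card ({a..<a+s} \<inter> S)" by (simp add: Int_commute)
  also have "real \<dots> = (\<Sum>k\<in>{a..<a+s} \<inter> S. 1)" by simp
  also have "\<dots> = (\<Sum>k\<in>{a..<a+s}. ind S k)"
    unfolding ind_def by (rule sum.inter_restrict) simp
  finally show ?thesis by (simp add: W_def)
qed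

lemma W_le: "W S a s \<le> real s"
proof -
  have "W S a s \<le> (\<Sum>k\<in>{a..<a+s}. 1)" unfolding W_def by (rule sum_mono) (simp add: ind_def)
  thus ?thesis by simp
qed

lemma W_ge0: "W S a s \<ge> 0"
  unfolding W_def by (rule sum_nonneg) (simp add: ind_def)

lemma W_mono: "S \<subseteq> T \<Longrightarrow> W S a s \<le> W T a s"
  unfolding W_def by (rule sum_mono) (auto simp: ind_def)

lemma W_split: "W S a (s+t) = W S a s + W S (a+s) t"
  unfolding W_def using sum.atLeastLessThan_concat[of a "a+s" "a+s+t" "ind S"]
  by (simp add: add.assoc)

lemma W_block:
  assumes per: "\<And>k. (k + M \<in> S) = (k \<in> S)"
  shows "W S a M = W S 0 M"
proof (induction a)
  case 0 show ?case by simp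
next
  case (Suc a)
  have "W S (Suc a) M = W S a M"
  proof (cases M)
    case 0 thus ?thesis by (simp add: W_def)
  next
    case (Suc M')
    have e1: "W S a M = ind S a + (\<Sum>k\<in>{Suc a..<a+M}. ind S k)"
      unfolding W_def using Suc by (simp add: sum.atLeast_Suc_lessThan)
    have e2: "W S (Suc a) M = (\<Sum>k\<in>{Suc a..<a+M}. ind S k) + ind S (a+M)"
      unfolding W_def using Suc by (simp add: sum.atLeastLessThan_Suc)
    have "ind S (a+M) = ind S a" using per[of a] by (simp add: ind_def)
    thus ?thesis using e1 e2 by simp
  qed
  thus ?case using Suc.IH by simp
qed

lemma W_blocks:
  assumes per: "\<And>k. (k + M \<in> S) = (k \<in> S)"
  shows "W S a (q*M) = real q * W S 0 M"
proof (induction q)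
  case 0 show ?case by (simp add: W_def)
next
  case (Suc q)
  have "W S a (Suc q * M) = W S a (q*M) + W S (a+q*M) M"
    using W_split[of S a "q*M" M] by (simp add: add.commute)
  also have "\<dots> = real q * W S 0 M + W S 0 M" using Suc.IH W_block[OF per] by simp
  finally show ?case by (simp add: algebra_simps)
qed

lemma W_periodic_bounds:
  assumes per: "\<And>k. (k + M \<in> S) = (k \<in> S)" and M: "M > 0"
  shows "W S a s \<le> W S 0 M / M * s + M" and "W S a s \<ge> W S 0 M / M * s - M"
proof -
  define q where "q = s div M"
  define r where "r = s mod M"
  have s: "s = q*M + r" by (simp add: q_def r_def)
  have r: "r < M" using M by (simp add: r_def)
  have W: "W S a s = real q * W S 0 M + W S (a+q*M) r"
    using W_split[of S a "q*M" r] W_blocks[OF per] s by simp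
  have c0: "0 \<le> W S 0 M" "W S 0 M \<le> M" using W_ge0 W_le by auto
  have r0: "0 \<le> W S (a+q*M) r" "W S (a+q*M) r \<le> r" using W_ge0 W_le by auto
  have sr: "real s = real q * M + r" using s by simp
  have "W S 0 M / M * s = real q * W S 0 M + W S 0 M / M * r"
    using M by (simp add: sr field_simps)
  moreover have "W S 0 M / M * r \<ge> 0" using c0 by simp
  moreover have "W S 0 M / M * r \<le> r"
  proof -
    have "W S 0 M / M \<le> 1" using c0 M by simp
    hence "W S 0 M / M * real r \<le> 1 * real r" by (intro mult_right_mono) auto
    thus ?thesis by simp
  qed
  moreover have "real r \<le> M" using r by simp
  ultimately show "W S a s \<le> W S 0 M / M * s + M" and "W S a s \<ge> W S 0 M / M * s - M"
    using W r0 by linarith+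
qed

definition Sm :: "nat \<Rightarrow> nat set" where
  "Sm m = {k. \<forall>p. prime p \<and> p \<le> m \<longrightarrow> p^m dvd k \<or>
      (\<exists>j\<in>A3star. j < m \<and> p^j dvd k \<and> \<not> p^(Suc j) dvd k)}"
definition Mm :: "nat \<Rightarrow> nat" where "Mm m = fact m ^ m"

lemma Mm_pos: "Mm m > 0" by (simp add: Mm_def)

lemma dvd_Mm: assumes "prime p" "p \<le> m" "j \<le> m" shows "p^j dvd Mm m"
proof -
  have "p dvd fact m" using assms prime_ge_1_nat by (intro dvd_fact) auto
  hence "p^m dvd fact m ^ m" by (rule dvd_power_same)
  moreover have "p^j dvd p^m" using assms(3) by (rule le_imp_power_dvd)
  ultimately show ?thesis unfolding Mm_def using dvd_trans by blast
qed

lemma S_per: "(k + Mm m \<in> Sm m) = (k \<in> Sm m)"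
proof -
  have "\<And>p j. prime p \<Longrightarrow> p \<le> m \<Longrightarrow> j \<le> m \<Longrightarrow> (p^j dvd k + Mm m) = (p^j dvd k)"
    using dvd_Mm by (simp add: dvd_add_left_iff)
  hence key: "\<And>p j. prime p \<Longrightarrow> p \<le> m \<Longrightarrow> j < m \<Longrightarrow> (p^j dvd k + Mm m) = (p^j dvd k) \<and>
     (p^Suc j dvd k + Mm m) = (p^Suc j dvd k)" by (meson Suc_leI less_imp_le)
  have key2: "\<And>p. prime p \<Longrightarrow> p \<le> m \<Longrightarrow> (p^m dvd k + Mm m) = (p^m dvd k)"
    using dvd_Mm by (simp add: dvd_add_left_iff)
  show ?thesis unfolding Sm_def using key key2 by auto
qed

lemma zero_A: "0 \<in> A3star" by (simp add: A3star_def)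
lemma one_A: "1 \<in> A3star"
  unfolding A3star_def
proof (clarify)
  fix k :: nat assume "((1::nat) div 3^k) mod 3 = 2"
  moreover have "k \<noteq> 0 \<Longrightarrow> (1::nat) div 3^k = 0" proof -
    assume "k \<noteq> 0" hence "(1::nat) < 3^k" by (intro one_less_power) auto
    thus ?thesis by simp
  qed
  ultimately show False by (cases "k = 0") auto
qed

lemma mult_not_dvd:
  assumes "prime (p::nat)" "k > 0" shows "\<not> p ^ Suc (multiplicity p k) dvd k"
proof
  assume "p ^ Suc (multiplicity p k) dvd k"
  hence "Suc (multiplicity p k) \<le> multiplicity p k"
    using assms by (intro multiplicity_geI) auto
  thus False by simp
qed

lemma G_sub_S: "G3star \<subseteq> Sm m"
proof
  fix k assume k: "k \<in> G3star"
  hence k0: "k > 0" by (simp add: G3star_def)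
  show "k \<in> Sm m" unfolding Sm_def
  proof (intro CollectI allI impI)
    fix p assume pp: "prime p \<and> p \<le> m"
    hence p: "prime p" "p \<le> m" by auto
    show "p ^ m dvd k \<or> (\<exists>j\<in>A3star. j < m \<and> p ^ j dvd k \<and> \<not> p ^ Suc j dvd k)"
    proof (cases "p^m dvd k")
    case True thus ?thesis by simp
    next
    case False hence nd: "\<not> p^m dvd k" .
    define j where "j = multiplicity p k"
    have jA: "j \<in> A3star"
    proof (cases "p dvd k")
      case True thus ?thesis using k p by (simp add: G3star_def j_def)
    next
      case False thus ?thesis by (simp add: j_def not_dvd_imp_multiplicity_0 zero_A)
    qed
    have d: "p^j dvd k" by (simp add: j_def multiplicity_dvd)
    have jm: "j < m"
    proof (rule ccontr)
      assume "\<not> j < m"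
      hence "p^m dvd p^j" by (intro le_imp_power_dvd) simp
      thus False using d nd dvd_trans by blast
    qed
    show ?thesis
      using jA jm d mult_not_dvd[OF p(1) k0] j_def by blast
    qed
  qed
qed

lemma S_bad:
  assumes "k \<in> Sm m" "k \<notin> G3star" "k > 0"
  shows "(\<exists>p. prime p \<and> m < p \<and> p^2 dvd k) \<or> (\<exists>p. prime p \<and> p \<le> m \<and> p^m dvd k)"
proof -
  obtain p where p: "prime p" "p dvd k" "multiplicity p k \<notin> A3star"
    using assms(2,3) by (auto simp: G3star_def)
  have "multiplicity p k \<noteq> 0" "multiplicity p k \<noteq> 1" using p zero_A one_A by metis+
  hence "2 \<le> multiplicity p k" by linarith
  hence p2: "p^2 dvd k" using multiplicity_dvd[of p k] le_imp_power_dvd dvd_trans by blast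
  show ?thesis
  proof (cases "m < p")
    case True thus ?thesis using p p2 by blast
  next
    case False
    hence pm: "p \<le> m" by simp
    have "\<not> (\<exists>j\<in>A3star. j < m \<and> p^j dvd k \<and> \<not> p^(Suc j) dvd k)"
      using p(3) multiplicity_eqI by metis
    hence "p^m dvd k" using assms(1) p(1) pm unfolding Sm_def by blast
    thus ?thesis using p(1) pm by blast
  qed
qed


lemma W_mult: assumes q: "q > 0" shows "W {k. q dvd k} 1 N \<le> real N / real q"
proof -
  have sub: "{k. q dvd k} \<inter> {1..<1+N} \<subseteq> (\<lambda>i. q*i) ` {1..N div q}"
  proof
    fix k assume "k \<in> {k. q dvd k} \<inter> {1..<1+N}"
    then obtain i where k: "k = q*i" "1 \<le> k" "k \<le> N" by auto
    have "i \<ge> 1" using k by (cases i) auto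
    moreover have "i \<le> N div q" using k q by (metis div_le_mono nonzero_mult_div_cancel_left not_gr0)
    ultimately show "k \<in> (\<lambda>i. q*i) ` {1..N div q}" using k by auto
  qed
  have "card ({k. q dvd k} \<inter> {1..<1+N}) \<le> card ((\<lambda>i. q*i) ` {1..N div q})"
    by (rule card_mono[OF _ sub]) simp
  also have "\<dots> \<le> N div q" using card_image_le[of "{1..N div q}" "\<lambda>i. q*i"] by simp
  finally have c: "W {k. q dvd k} 1 N \<le> real (N div q)" by (simp add: W_card)
  have "real (N div q) * real q \<le> real N"
    by (metis div_times_less_eq_dividend of_nat_le_iff of_nat_mult)
  hence "real (N div q) \<le> real N / real q" using q by (simp add: field_simps)
  thus ?thesis using c by linarith
qed

lemma tail_aux: "m \<ge> 1 \<Longrightarrow> m \<le> n \<Longrightarrow> (\<Sum>p\<in>{m<..n}. 1 / real p ^ 2) \<le> 1 / real m - 1 / real n"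
proof (induction n)
  case 0 thus ?case by simp
next
  case (Suc n)
  show ?case
  proof (cases "m \<le> n")
    case False hence "m = Suc n" using Suc.prems by simp
    thus ?thesis by simp
  next
    case True
    have n1: "n \<ge> 1" using True Suc.prems by simp
    have "{m<..Suc n} = insert (Suc n) {m<..n}" using True by auto
    hence "(\<Sum>p\<in>{m<..Suc n}. 1 / real p ^ 2) = 1 / real (Suc n) ^ 2 + (\<Sum>p\<in>{m<..n}. 1 / real p ^ 2)"
      by simp
    also have "\<dots> \<le> 1 / real (Suc n) ^ 2 + (1 / real m - 1 / real n)" using Suc.IH[OF Suc.prems(1) True] by simp
    also have "\<dots> \<le> 1 / real m - 1 / real (Suc n)"
    proof -
      have e: "1 / real n - 1 / real (Suc n) = 1 / (real n * real (Suc n))"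
        using n1 by (simp add: field_simps)
      have "real n * real (Suc n) \<le> real (Suc n) ^ 2" by (simp add: power2_eq_square)
      moreover have "real n * real (Suc n) > 0" using n1 by simp
      ultimately have "1 / real (Suc n) ^ 2 \<le> 1 / (real n * real (Suc n))"
        by (intro divide_left_mono) auto
      hence "1 / real (Suc n) ^ 2 \<le> 1 / real n - 1 / real (Suc n)" using e by simp
      thus ?thesis by simp
    qed
    finally show ?thesis .
  qed
qed

lemma tail: "m \<ge> 1 \<Longrightarrow> (\<Sum>p\<in>{m<..n}. 1 / real p ^ 2) \<le> 1 / real m"
proof (cases "m \<le> n")
  case True
  assume "m \<ge> 1"
  thus ?thesis using tail_aux[OF _ True] by (smt (verit) of_nat_0_le_iff divide_nonneg_nonneg)
qed simp

lemma S_count: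
  assumes m: "m \<ge> 1"
  shows "W (Sm m) 1 N \<le> W G3star 1 N + real N / real m + real m * real N / 2^m"
proof -
  define I where "I = {m<..N}"
  define J where "J = {2..m}"
  have pt: "ind (Sm m) k \<le> ind G3star k + (\<Sum>p\<in>I. ind {k. p^2 dvd k} k) + (\<Sum>p\<in>J. ind {k. p^m dvd k} k)"
    if k: "k \<in> {1..<1+N}" for k
  proof -
    have s1: "(\<Sum>p\<in>I. ind {k. p^2 dvd k} k) \<ge> 0" "(\<Sum>p\<in>J. ind {k. p^m dvd k} k) \<ge> 0" "ind G3star k \<ge> 0"
      by (auto intro!: sum_nonneg simp: ind_def)
    show ?thesis
    proof (cases "k \<in> Sm m \<and> k \<notin> G3star")
      case False thus ?thesis using s1 by (auto simp: ind_def)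
    next
      case True
      have k0: "k > 0" using k by simp
      from S_bad[OF conjunct1[OF True] conjunct2[OF True] k0]
      show ?thesis
      proof
        assume "\<exists>p. prime p \<and> m < p \<and> p^2 dvd k"
        then obtain p where p: "prime p" "m < p" "p^2 dvd k" by blast
        have "p \<le> p^2" by (simp add: power2_eq_square)
        also have "p^2 \<le> k" using p(3) k0 by (simp add: dvd_imp_le)
        finally have "p \<in> I" using k p(2) unfolding I_def by simp
        hence "ind {k. p^2 dvd k} k \<le> (\<Sum>p\<in>I. ind {k. p^2 dvd k} k)"
          by (intro member_le_sum) (auto simp: ind_def I_def)
        thus ?thesis using p(3) s1 True by (simp add: ind_def)
      next
        assume "\<exists>p. prime p \<and> p \<le> m \<and> p^m dvd k"
        then obtain p where p: "prime p" "p \<le> m" "p^m dvd k" by blast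
        have "p \<in> J" using p prime_ge_2_nat unfolding J_def by auto
        hence "ind {k. p^m dvd k} k \<le> (\<Sum>p\<in>J. ind {k. p^m dvd k} k)"
          by (intro member_le_sum) (auto simp: ind_def J_def)
        thus ?thesis using p(3) s1 True by (simp add: ind_def)
      qed
    qed
  qed
  have "W (Sm m) 1 N \<le> (\<Sum>k\<in>{1..<1+N}. ind G3star k + (\<Sum>p\<in>I. ind {k. p^2 dvd k} k) + (\<Sum>p\<in>J. ind {k. p^m dvd k} k))"
    unfolding W_def using pt by (intro sum_mono) auto
  also have "\<dots> = W G3star 1 N + (\<Sum>p\<in>I. W {k. p^2 dvd k} 1 N) + (\<Sum>p\<in>J. W {k. p^m dvd k} 1 N)"
    unfolding W_def sum.distrib by (simp add: sum.swap[of _ I] sum.swap[of _ J])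
  also have "(\<Sum>p\<in>I. W {k. p^2 dvd k} 1 N) \<le> (\<Sum>p\<in>I. real N * (1 / real p ^ 2))"
    by (rule sum_mono) (use W_mult[of "_^2" N] m in \<open>auto simp: I_def\<close>)
  also have "\<dots> = real N * (\<Sum>p\<in>I. 1 / real p ^ 2)" by (simp add: sum_distrib_left)
  also have "\<dots> \<le> real N * (1 / real m)" unfolding I_def by (intro mult_left_mono tail m) auto
  also have "(\<Sum>p\<in>J. W {k. p^m dvd k} 1 N) \<le> (\<Sum>p\<in>J. real N / 2^m)"
  proof (rule sum_mono)
    fix p assume p: "p \<in> J"
    hence "(2::real)^m \<le> real p ^ m" by (intro power_mono) (auto simp: J_def)
    moreover have "real p > 0" using p by (simp add: J_def)
    ultimately have "real N / real p ^ m \<le> real N / 2^m" by (intro divide_left_mono) auto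
    moreover have "W {k. p^m dvd k} 1 N \<le> real N / real (p^m)" using p by (intro W_mult) (auto simp: J_def)
    ultimately show "W {k. p^m dvd k} 1 N \<le> real N / 2^m" by simp
  qed
  also have "\<dots> = real (card J) * (real N / 2^m)" by simp
  also have "\<dots> \<le> real m * (real N / 2^m)"
    by (intro mult_right_mono) (auto simp: J_def)
  finally show ?thesis by simp
qed


definition dl :: "nat \<Rightarrow> real" where "dl m = W (Sm m) 0 (Mm m) / real (Mm m)"

lemma dl_nonneg: "dl m \<ge> 0" unfolding dl_def using W_ge0 by simp

lemma ivl_eq: "{n<..n+s} = {Suc n..<Suc n + s}" by auto

lemma unif_upper:
  assumes s: "s > 0" shows "uniform_seq G3star s \<le> dl m + real (Mm m) / real s"
proof -
  define X where "X = {card (G3star \<inter> {n<..n+s}) | n. True}"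
  have fin: "finite X" unfolding X_def
  proof (rule finite_subset[of _ "{0..s}"])
    show "{card (G3star \<inter> {n<..n+s}) | n. True} \<subseteq> {0..s}"
    proof clarify
      fix n
      have "card (G3star \<inter> {n<..n+s}) \<le> card {n<..n+s}" by (rule card_mono) auto
      thus "card (G3star \<inter> {n<..n+s}) \<in> {0..s}" by simp
    qed
  qed simp
  have ne: "X \<noteq> {}" unfolding X_def by auto
  obtain n where n: "Max X = card (G3star \<inter> {n<..n+s})" using Max_in[OF fin ne] unfolding X_def by auto
  have "real (Max X) = W G3star (Suc n) s" by (simp add: n W_card ivl_eq)
  also have "\<dots> \<le> W (Sm m) (Suc n) s" by (rule W_mono[OF G_sub_S])
  also have "\<dots> \<le> dl m * s + Mm m"
    using W_periodic_bounds(1)[OF S_per Mm_pos] unfolding dl_def by blast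
  finally have "real (Max X) / s \<le> (dl m * s + Mm m) / s" using s by (simp add: divide_right_mono)
  also have "\<dots> = dl m + Mm m / s" using s by (simp add: field_simps)
  finally show ?thesis unfolding uniform_seq_def X_def .
qed

lemma dens_le_unif: "density_seq G3star s \<le> uniform_seq G3star s"
proof -
  define X where "X = {card (G3star \<inter> {n<..n+s}) | n. True}"
  have fin: "finite X" unfolding X_def
  proof (rule finite_subset[of _ "{0..s}"])
    show "{card (G3star \<inter> {n<..n+s}) | n. True} \<subseteq> {0..s}"
    proof clarify
      fix n
      have "card (G3star \<inter> {n<..n+s}) \<le> card {n<..n+s}" by (rule card_mono) auto
      thus "card (G3star \<inter> {n<..n+s}) \<in> {0..s}" by simp
    qed
  qed simp
  have "card (G3star \<inter> {0<..0+s}) \<in> X" unfolding X_def by blast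
  hence "card (G3star \<inter> {0<..0+s}) \<le> Max X" using fin by simp
  moreover have "{0<..0+s} = {1..s}" by auto
  ultimately have "card (G3star \<inter> {1..s}) \<le> Max X" by simp
  hence "real (card (G3star \<inter> {1..s})) / s \<le> real (Max X) / s" by (simp add: divide_right_mono)
  thus ?thesis unfolding uniform_seq_def density_seq_def X_def .
qed

lemma dens_lower:
  assumes N: "N > 0" and m: "m \<ge> 1"
  shows "density_seq G3star N \<ge> dl m - real (Mm m) / real N - (1 / real m + real m / 2^m)"
proof -
  have "dl m * N - Mm m \<le> W (Sm m) 1 N"
    using W_periodic_bounds(2)[OF S_per Mm_pos] unfolding dl_def by blast
  also have "\<dots> \<le> W G3star 1 N + real N / real m + real m * real N / 2^m" by (rule S_count[OF m])
  moreover have "(dl m - real (Mm m) / real N - (1 / real m + real m / 2^m)) * N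
     = dl m * N - Mm m - real N / real m - real m * real N / 2^m"
    using N by (simp add: field_simps)
  ultimately have "(dl m - real (Mm m) / real N - (1 / real m + real m / 2^m)) * N \<le> W G3star 1 N"
    by linarith
  moreover have "W G3star 1 N = real (card (G3star \<inter> {1..N}))"
  proof -
    have "{1..<1+N} = {1..N}" by auto
    thus ?thesis by (simp add: W_card)
  qed
  ultimately show ?thesis unfolding density_seq_def using N by (simp add: pos_le_divide_eq)
qed

lemma eps_lim: "(\<lambda>m. 1 / real m + real m / 2^m) \<longlonglongrightarrow> 0" by real_asymp

theorem mainTheorem2:
  shows "\<exists>d::real. density_seq G3star \<longlonglongrightarrow> d \<and> uniform_seq G3star \<longlonglongrightarrow> d"
proof -
  define d where "d = Inf (range dl)"
  have bdd: "bdd_below (range dl)" using dl_nonneg by (intro bdd_belowI[of _ 0]) auto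
  have dle: "d \<le> dl m" for m unfolding d_def using bdd by (intro cInf_lower) auto
  have upper: "eventually (\<lambda>s. uniform_seq G3star s < a) sequentially" if a: "a > d" for a
  proof -
    obtain k where k: "dl k < a" using a bdd unfolding d_def by (subst (asm) cInf_less_iff) auto
    have "(\<lambda>s. dl k + real (Mm k) / real s) \<longlonglongrightarrow> dl k + 0"
      by (intro tendsto_add tendsto_const lim_const_over_n)
    hence "eventually (\<lambda>s. dl k + real (Mm k) / real s < a) sequentially"
      using k by (intro order_tendstoD(2)) auto
    moreover have "eventually (\<lambda>s. s > (0::nat)) sequentially" by (rule eventually_gt_at_top)
    ultimately show ?thesis
    proof eventually_elim
      fix s :: nat assume "dl k + real (Mm k) / real s < a" "s > 0"
      thus "uniform_seq G3star s < a" using unif_upper[of s k] by linarith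
    qed
  qed
  have lower: "eventually (\<lambda>s. a < density_seq G3star s) sequentially" if a: "a < d" for a
  proof -
    have "eventually (\<lambda>m. 1 / real m + real m / 2^m < d - a) sequentially"
      using a by (intro order_tendstoD(2)[OF eps_lim]) auto
    moreover have "eventually (\<lambda>m. m \<ge> (1::nat)) sequentially" by (rule eventually_ge_at_top)
    ultimately have "eventually (\<lambda>m. 1 / real m + real m / 2^m < d - a \<and> m \<ge> 1) sequentially"
      by eventually_elim auto
    then obtain N0 where "\<forall>n\<ge>N0. 1 / real n + real n / 2^n < d - a \<and> n \<ge> 1"
      by (auto simp: eventually_sequentially)
    then obtain m where m: "1 / real m + real m / 2^m < d - a" "m \<ge> 1" by blast
    have "(\<lambda>N. dl m - real (Mm m) / real N - (1 / real m + real m / 2^m)) \<longlonglongrightarrow> dl m - 0 - (1 / real m + real m / 2^m)"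
      by (intro tendsto_diff tendsto_const lim_const_over_n)
    hence "eventually (\<lambda>N. a < dl m - real (Mm m) / real N - (1 / real m + real m / 2^m)) sequentially"
      using m(1) dle[of m] by (intro order_tendstoD(1)) auto
    moreover have "eventually (\<lambda>s. s > (0::nat)) sequentially" by (rule eventually_gt_at_top)
    ultimately show ?thesis
    proof eventually_elim
      fix s :: nat assume "a < dl m - real (Mm m) / real s - (1 / real m + real m / 2^m)" "s > 0"
      thus "a < density_seq G3star s" using dens_lower[of s m] m(2) by linarith
    qed
  qed
  have "density_seq G3star \<longlonglongrightarrow> d"
  proof (rule order_tendstoI)
    fix a assume "a < d" thus "eventually (\<lambda>s. a < density_seq G3star s) sequentially" by (rule lower)
  next
    fix a assume "a > d"
    from upper[OF this] show "eventually (\<lambda>s. density_seq G3star s < a) sequentially"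
    proof eventually_elim
      fix s assume "uniform_seq G3star s < a"
      thus "density_seq G3star s < a" using dens_le_unif[of s] by linarith
    qed
  qed
  moreover have "uniform_seq G3star \<longlonglongrightarrow> d"
  proof (rule order_tendstoI)
    fix a assume "a < d"
    from lower[OF this] show "eventually (\<lambda>s. a < uniform_seq G3star s) sequentially"
    proof eventually_elim
      fix s assume "a < density_seq G3star s"
      thus "a < uniform_seq G3star s" using dens_le_unif[of s] by linarith
    qed
  next
    fix a assume "a > d" thus "eventually (\<lambda>s. uniform_seq G3star s < a) sequentially" by (rule upper)
  qed
  ultimately show ?thesis by blast
qed

end
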